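(* Let $\Omega\subset\mathbb{C}^2$ be a domain, let $h$ be a holomorphic function on $\Omega$, let $\rho(z):=|h(z)|^2-1$ with $d\rho\neq 0$ on $M:=\{z\in\Omega:\rho(z)=0\}$, and let $K$ be a $C^2$-smooth totally real disc contained in $M$. Then $h$ is constant along each leaf of the characteristic foliation of $K$.
   Context: A $C^2$-smooth totally real disc is a compact subset of a $C^2$-smooth submanifold $N$ of $\mathbb{C}^2$ with $T_pN\cap iT_pN=\{0\}$ for all $p\in N$, which is $C^2$-diffeomorphic to the closed unit disc in the plane. For $p\in M$, $T^{\mathbb{C}}_pM:=T_pM\cap iT_pM$. The characteristic foliation of $K$ is the foliation whose leaves are the curves $\gamma$ in $K$ with $\gamma'(t)\in T_{\gamma(t)}K\cap T^{\mathbb{C}}_{\gamma(t)}M$ for all $t$. *)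

theory Defs
  imports "HOL-Analysis.Analysis"
begin

text \<open>We model \<open>\<complex>\<^sup>2\<close> as \<open>complex \<times> complex\<close> and the parameter plane \<open>\<real>\<^sup>2\<close>
  as \<open>real \<times> real\<close> (Euclidean norm, so \<open>cball 0 1\<close> is the closed unit disc).\<close>

definition cmul :: "complex \<Rightarrow> complex \<times> complex \<Rightarrow> complex \<times> complex" where
  "cmul c w = (c * fst w, c * snd w)"

definition holomorphic2_on :: "(complex \<times> complex \<Rightarrow> complex) \<Rightarrow> (complex \<times> complex) set \<Rightarrow> bool" where
  "holomorphic2_on h \<Omega> \<longleftrightarrow>
     (\<forall>z\<in>\<Omega>. \<exists>a b. (h has_derivative (\<lambda>w. a * fst w + b * snd w)) (at z))"

definition C2_on :: "('a::real_normed_vector) set \<Rightarrow> ('a \<Rightarrow> 'b::real_normed_vector) \<Rightarrow> bool" where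
  "C2_on U f \<longleftrightarrow> (\<exists>D1 D2. (\<forall>x\<in>U.
      (f has_derivative blinfun_apply (D1 x)) (at x) \<and>
      (D1 has_derivative blinfun_apply (D2 x)) (at x)) \<and> continuous_on U D2)"

text \<open>\<open>K\<close> is a \<open>C\<^sup>2\<close>-smooth totally real disc, presented by a \<open>C\<^sup>2\<close> injective immersion
  \<open>\<phi>\<close> of an open neighbourhood \<open>U\<close> of the closed unit disc (its image near the disc
  is the ambient surface \<open>N\<close>), with \<open>K = \<phi>(closed disc)\<close> and \<open>T\<^sub>pN \<inter> i T\<^sub>pN = {0}\<close>.\<close>
definition tangent_plane :: "(real \<times> real \<Rightarrow> complex \<times> complex) \<Rightarrow> real \<times> real \<Rightarrow> (complex \<times> complex) set" where
  "tangent_plane \<phi> x = range (frechet_derivative \<phi> (at x))"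

definition totally_real_disc_chart ::
  "(real \<times> real) set \<Rightarrow> (real \<times> real \<Rightarrow> complex \<times> complex) \<Rightarrow> (complex \<times> complex) set \<Rightarrow> bool" where
  "totally_real_disc_chart U \<phi> K \<longleftrightarrow>
     open U \<and> cball 0 1 \<subseteq> U \<and> C2_on U \<phi> \<and> inj_on \<phi> U \<and>
     (\<forall>x\<in>U. \<phi> differentiable (at x) \<and> inj (frechet_derivative \<phi> (at x)) \<and>
        (\<forall>v\<in>tangent_plane \<phi> x. cmul \<i> v \<in> tangent_plane \<phi> x \<longrightarrow> v = 0)) \<and>
     K = \<phi> ` cball 0 1"

definition tangent_K ::
  "(real \<times> real) set \<Rightarrow> (real \<times> real \<Rightarrow> complex \<times> complex) \<Rightarrow> complex \<times> complex \<Rightarrow> (complex \<times> complex) set" where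
  "tangent_K U \<phi> p = tangent_plane \<phi> (inv_into U \<phi> p)"

definition complex_tangent :: "(complex \<times> complex \<Rightarrow> real) \<Rightarrow> complex \<times> complex \<Rightarrow> (complex \<times> complex) set" where
  "complex_tangent \<rho> p = {v. frechet_derivative \<rho> (at p) v = 0 \<and>
                              (\<exists>w. frechet_derivative \<rho> (at p) w = 0 \<and> v = cmul \<i> w)}"

end

theory Submission
  imports Defs
begin

lemma aux1: "((p::real) * p + q * q) * r = p * (p * r + q * s) + q * (- p * s + q * r)" by algebra
lemma aux2: "((p::real) * p + q * q) * s = q * (p * r + q * s) - p * (- p * s + q * r)" by algebra
lemma key_alg:
  fixes hp z :: complex
  assumes "hp \<noteq> 0" "hp \<bullet> z = 0" "hp \<bullet> (\<i> * z) = 0"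
  shows "z = 0"
proof -
  have a: "Re hp * Re z + Im hp * Im z = 0" "- Re hp * Im z + Im hp * Re z = 0"
    using assms(2,3) by (auto simp: inner_complex_def algebra_simps)
  have "(Re hp ^ 2 + Im hp ^ 2) * Re z = Re hp * (Re hp * Re z + Im hp * Im z) + Im hp * (- Re hp * Im z + Im hp * Re z)"
    unfolding power2_eq_square by (rule aux1)
  hence r: "(Re hp ^ 2 + Im hp ^ 2) * Re z = 0" using a by simp
  have "(Re hp ^ 2 + Im hp ^ 2) * Im z = Im hp * (Re hp * Re z + Im hp * Im z) - Re hp * (- Re hp * Im z + Im hp * Re z)"
    unfolding power2_eq_square by (rule aux2)
  hence i: "(Re hp ^ 2 + Im hp ^ 2) * Im z = 0" using a by simp
  have "Re hp ^ 2 + Im hp ^ 2 \<noteq> 0"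
    using assms(1) by (simp add: complex_eq_iff)
  with r i show ?thesis by (auto simp: complex_eq_iff)
qed
theorem lemma2p3:
  fixes \<Omega> :: "(complex \<times> complex) set"
    and h :: "complex \<times> complex \<Rightarrow> complex"
    and \<rho> :: "complex \<times> complex \<Rightarrow> real"
    and M K :: "(complex \<times> complex) set"
    and U :: "(real \<times> real) set"
    and \<phi> :: "real \<times> real \<Rightarrow> complex \<times> complex"
  assumes "open \<Omega>" and "connected \<Omega>"
    and "holomorphic2_on h \<Omega>"
    and "\<rho> = (\<lambda>z. (cmod (h z))\<^sup>2 - 1)"
    and "M = {z \<in> \<Omega>. \<rho> z = 0}"
    and "\<forall>z\<in>M. \<exists>D. (\<rho> has_derivative D) (at z) \<and> D \<noteq> (\<lambda>_. 0)"
    and "totally_real_disc_chart U \<phi> K"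
    and "K \<subseteq> M"
  shows "\<forall>(I :: real set) \<gamma> \<gamma>'. is_interval I \<and> \<gamma> ` I \<subseteq> K \<and>
           (\<forall>t\<in>I. (\<gamma> has_vector_derivative \<gamma>' t) (at t within I) \<and>
                   \<gamma>' t \<in> tangent_K U \<phi> (\<gamma> t) \<inter> complex_tangent \<rho> (\<gamma> t))
         \<longrightarrow> (\<exists>c. \<forall>t\<in>I. h (\<gamma> t) = c)"
proof (intro allI impI)
  fix I :: "real set" and \<gamma> \<gamma>'
  assume H: "is_interval I \<and> \<gamma> ` I \<subseteq> K \<and>
           (\<forall>t\<in>I. (\<gamma> has_vector_derivative \<gamma>' t) (at t within I) \<and>
                   \<gamma>' t \<in> tangent_K U \<phi> (\<gamma> t) \<inter> complex_tangent \<rho> (\<gamma> t))"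
  have cvx: "convex I" using H is_interval_convex by blast
  have "\<forall>t\<in>I. ((h \<circ> \<gamma>) has_derivative (\<lambda>_. 0)) (at t within I)"
  proof
    fix t assume t: "t \<in> I"
    define p where "p = \<gamma> t"
    have pM: "p \<in> M" using H t assms(8) p_def by blast
    hence pO: "p \<in> \<Omega>" and r0: "\<rho> p = 0" using assms(5) by auto
    have hp1: "cmod (h p) = 1" using r0 assms(4)
      by (simp add: power2_eq_1_iff) (smt (verit) norm_ge_zero power2_eq_1_iff)
    hence hpnz: "h p \<noteq> 0" by auto
    obtain a b where hd: "(h has_derivative (\<lambda>w. a * fst w + b * snd w)) (at p)"
      using assms(3) pO unfolding holomorphic2_on_def by blast
    define L where "L = (\<lambda>w::complex\<times>complex. a * fst w + b * snd w)"
    have rd: "(\<rho> has_derivative (\<lambda>v. h p \<bullet> L v + L v \<bullet> h p)) (at p)"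
    proof -
      have "((\<lambda>z. h z \<bullet> h z - 1) has_derivative (\<lambda>v. h p \<bullet> L v + L v \<bullet> h p)) (at p)"
        using has_derivative_diff[OF has_derivative_inner[OF hd hd] has_derivative_const[of 1]]
        by (simp add: L_def)
      moreover have "(\<lambda>z. h z \<bullet> h z - 1) = \<rho>"
        using assms(4) by (auto simp: power2_norm_eq_inner)
      ultimately show ?thesis by simp
    qed
    have fd: "frechet_derivative \<rho> (at p) = (\<lambda>v. h p \<bullet> L v + L v \<bullet> h p)"
      using frechet_derivative_at[OF rd] by simp
    have ct: "\<gamma>' t \<in> complex_tangent \<rho> p" using H t p_def by blast
    then obtain w where w0: "frechet_derivative \<rho> (at p) w = 0"
      and vw: "\<gamma>' t = cmul \<i> w" and v0: "frechet_derivative \<rho> (at p) (\<gamma>' t) = 0"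
      unfolding complex_tangent_def by blast
    have Lv: "L (\<gamma>' t) = \<i> * L w" using vw by (simp add: L_def cmul_def algebra_simps)
    have e1: "h p \<bullet> L w = 0" using w0 fd by (simp add: inner_commute)
    have e2: "h p \<bullet> (\<i> * L w) = 0" using v0 fd Lv by (simp add: inner_commute)
    have "L w = 0" using key_alg[OF hpnz e1 e2] .
    hence Lz: "L (\<gamma>' t) = 0" using Lv by simp
    have gd: "(\<gamma> has_derivative (\<lambda>s. s *\<^sub>R \<gamma>' t)) (at t within I)"
      using H t unfolding has_vector_derivative_def by blast
    have hdw: "(h has_derivative L) (at (\<gamma> t) within \<gamma> ` I)"
      using hd L_def p_def has_derivative_at_withinI by blast
    have "((h \<circ> \<gamma>) has_derivative (\<lambda>s. L (s *\<^sub>R \<gamma>' t))) (at t within I)"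
      using diff_chain_within[OF gd hdw] by (simp add: comp_def)
    moreover have "(\<lambda>s. L (s *\<^sub>R \<gamma>' t)) = (\<lambda>_. 0)"
    proof
      fix s :: real
      have "L (s *\<^sub>R \<gamma>' t) = of_real s * L (\<gamma>' t)"
        by (simp add: L_def scaleR_conv_of_real algebra_simps)
      thus "L (s *\<^sub>R \<gamma>' t) = 0" using Lz by simp
    qed
    ultimately show "((h \<circ> \<gamma>) has_derivative (\<lambda>_. 0)) (at t within I)" by simp
  qed
  hence "\<exists>c. \<forall>t\<in>I. (h \<circ> \<gamma>) t = c"
    using has_derivative_zero_constant[OF cvx] by blast
  thus "\<exists>c. \<forall>t\<in>I. h (\<gamma> t) = c" by auto
qed

end
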